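(* Let $d\ge2$, let $\mathbb{F}_q$ have characteristic $p>d$, let $d_1\ge0$, $d_2\ge1$ with $d_1+d_2=d$, let $n\ge1$, and let $1\le P_1\le P_2$ be integers (with $P_1=P_2$ if $d_1=0$). Assume there exist $C_0\in\mathbb{F}_q^*$ and a non-singular form $f\in\mathbb{F}_q[x_1,\dots,x_n]$ of degree $d$ such that $G(\mathbf{x};\mathbf{y})=C_0\Gamma_f(\mathbf{x},\dots,\mathbf{x},\mathbf{y},\dots,\mathbf{y})$, with $\mathbf{x}$ in the first $d_1$ slots and $\mathbf{y}$ in the last $d_2$ slots. Let $\alpha\in\mathbb{T}$ and $\mathbf{Q}=(Q_1,Q_2)\in\mathbb{Z}_{\le0}^2$. Then $$N_2^{(0)}(Q_2;\alpha)\le q^{-d_1Q_1n}\,q^{-(d_2-1)Q_2n}\,N_1^{(d_1)}(\mathbf{Q};\alpha).$$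
   Context: $\mathbb{K}_\infty=\mathbb{F}_q((u^{-1}))$ with $|\alpha|=q^{\mathrm{ord}\,\alpha}$ ($\mathrm{ord}$ = largest exponent of $u$ with nonzero coefficient, $|0|=0$), $|\mathbf{x}|=\max_i|x_i|$; $\mathbb{T}=\{|\alpha|<1\}$; for $\alpha\in\mathbb{K}_\infty$, $\{\alpha\}\in\mathbb{T}$ is its fractional part (the sum of its terms $a_iu^i$ with $i\le-1$) and $\|\alpha\|=|\{\alpha\}|$. Writing $f(\mathbf{x})=\sum_{i_1,\dots,i_d}c_{i_1,\dots,i_d}x_{i_1}\cdots x_{i_d}$ with coefficients symmetric in the indices, $\Gamma_f(\mathbf{x}_1,\dots,\mathbf{x}_d)=\sum c_{i_1,\dots,i_d}x_{1,i_1}\cdots x_{d,i_d}$. Non-singular means $\nabla f$ has no common zero in $\overline{\mathbb{F}_q}^n$ except $\mathbf{0}$. Writing $G(\mathbf{x};\mathbf{y})=\sum_{\mathbf{j},\mathbf{k}}G_{\mathbf{j},\mathbf{k}}x_{j_1}\cdots x_{j_{d_1}}y_{k_1}\cdots y_{k_{d_2}}$ with $G_{\mathbf{j},\mathbf{k}}$ symmetric in $\mathbf{j}$ and in $\mathbf{k}$, set $\Gamma_G(\mathbf{x}_1,\dots,\mathbf{x}_{d_1};\mathbf{y}_1,\dots,\mathbf{y}_{d_2})=\sum G_{\mathbf{j},\mathbf{k}}x_{1,j_1}\cdots x_{d_1,j_{d_1}}y_{1,k_1}\cdots y_{d_2,k_{d_2}}$. Let $\mathbf{e}_i$ be the $i$-th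 unit vector, $\underline{\mathbf{x}}=(\mathbf{x}_1,\dots,\mathbf{x}_{d_1})\in\mathbb{F}_q[u]^{d_1n}$, $\underline{\mathbf{y}}'=(\mathbf{y}_1,\dots,\mathbf{y}_{d_2-1})\in\mathbb{F}_q[u]^{(d_2-1)n}$. Then $N_2^{(0)}(Q_2;\alpha)$ is the number of $(\underline{\mathbf{x}},\underline{\mathbf{y}}')$ with $|\mathbf{x}_i|<q^{P_1}$ for all $i$, $|\mathbf{y}_i|<q^{P_2}$ for all $i$, and $\|\alpha\Gamma_G(\underline{\mathbf{x}};\underline{\mathbf{y}}',\mathbf{e}_i)\|<q^{-P_2}$ for all $1\le i\le n$. $N_1^{(d_1)}(\mathbf{Q};\alpha)$ is the number of $(\underline{\mathbf{x}},\underline{\mathbf{y}}')$ with $|\mathbf{x}_i|<q^{Q_1+P_1}$ for all $i$, $|\mathbf{y}_i|<q^{Q_2+P_2}$ for all $i$, and $\|\alpha\Gamma_G(\underline{\mathbf{x}};\underline{\mathbf{y}}',\mathbf{e}_i)\|<q^{d_1Q_1+(d_2-1)Q_2-P_2}$ for all $1\le i\le n$. *)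

theory Defs
  imports "HOL-Algebra.Algebraic_Closure_Type"
begin

definition idx :: "nat \<Rightarrow> nat \<Rightarrow> nat list set" where
  "idx m n = {is. length is = m \<and> (\<forall>i\<in>set is. i < n)}"

(* A degree-d form in n variables, f(x) = sum c_{i_1..i_d} x_{i_1}...x_{i_d},
   given by its coefficient tensor c, symmetric in the indices. *)
definition sym_coeffs :: "nat \<Rightarrow> nat \<Rightarrow> (nat list \<Rightarrow> 'a) \<Rightarrow> bool" where
  "sym_coeffs d n c \<longleftrightarrow> (\<forall>is\<in>idx d n. \<forall>js\<in>idx d n. mset is = mset js \<longrightarrow> c is = c js)"

(* formal partial derivative d f / d x_j, evaluated at z (over any comm. ring 'b,
   coefficients mapped in by h) *)
definition form_partial ::
  "('a \<Rightarrow> 'b::comm_ring_1) \<Rightarrow> nat \<Rightarrow> nat \<Rightarrow> (nat list \<Rightarrow> 'a) \<Rightarrow> nat \<Rightarrow> (nat \<Rightarrow> 'b) \<Rightarrow> 'b" where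
  "form_partial h d n c j z =
     (\<Sum>is\<in>idx d n. h (c is) *
        (\<Sum>t\<in>{t. t < d \<and> is ! t = j}. (\<Prod>s\<in>{..<d} - {t}. z (is ! s))))"

definition nonsingular_form :: "nat \<Rightarrow> nat \<Rightarrow> (nat list \<Rightarrow> 'a::field) \<Rightarrow> bool" where
  "nonsingular_form d n c \<longleftrightarrow>
     (\<forall>z :: nat \<Rightarrow> 'a alg_closure.
        (\<forall>j<n. form_partial to_ac d n c j z = 0) \<longrightarrow> (\<forall>j<n. z j = 0))"

(* Gamma_G(x_1..x_{d1}; y_1..y_{d2}) for vectors of polynomials;
   Xv i j = j-th coordinate of x_{i+1}, Yv i j = j-th coordinate of y_{i+1} *)
definition GammaG ::
  "nat \<Rightarrow> nat \<Rightarrow> nat \<Rightarrow> (nat list \<Rightarrow> nat list \<Rightarrow> 'a::comm_ring_1)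
     \<Rightarrow> (nat \<Rightarrow> nat \<Rightarrow> 'a poly) \<Rightarrow> (nat \<Rightarrow> nat \<Rightarrow> 'a poly) \<Rightarrow> 'a poly" where
  "GammaG n d1 d2 Gc Xv Yv =
     (\<Sum>js\<in>idx d1 n. \<Sum>ks\<in>idx d2 n.
        smult (Gc js ks) ((\<Prod>t\<in>{..<d1}. Xv t (js ! t)) * (\<Prod>t\<in>{..<d2}. Yv t (ks ! t))))"

(* the tuple (y_1,...,y_{d2-1}, e_i) *)
definition ext_unit :: "nat \<Rightarrow> (nat \<Rightarrow> nat \<Rightarrow> 'a::comm_semiring_1 poly) \<Rightarrow> nat \<Rightarrow> nat \<Rightarrow> nat \<Rightarrow> 'a poly" where
  "ext_unit d2 Yv i = (\<lambda>t j. if t < d2 - 1 then Yv t j else if j = i then 1 else 0)"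

(* Elements of T = {|alpha|<1} in F_q((u^-1)): alpha k = coefficient of u^k,
   with alpha k = 0 for k >= 0. *)
definition in_T :: "(int \<Rightarrow> 'a::zero) \<Rightarrow> bool" where
  "in_T \<alpha> \<longleftrightarrow> (\<forall>k\<ge>0. \<alpha> k = 0)"

(* coefficient of u^k in alpha * g, for g in F_q[u] *)
definition ser_poly_mult :: "(int \<Rightarrow> 'a::comm_semiring_1) \<Rightarrow> 'a poly \<Rightarrow> int \<Rightarrow> 'a" where
  "ser_poly_mult \<alpha> g k = (\<Sum>j\<le>degree g. coeff g j * \<alpha> (k - int j))"

(* ||alpha*g|| < q^e : all coefficients of u^k, e <= k <= -1, of alpha*g vanish *)
definition fnorm_lt :: "(int \<Rightarrow> 'a::comm_semiring_1) \<Rightarrow> 'a poly \<Rightarrow> int \<Rightarrow> bool" where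
  "fnorm_lt \<alpha> g e \<longleftrightarrow> (\<forall>k. e \<le> k \<and> k \<le> -1 \<longrightarrow> ser_poly_mult \<alpha> g k = 0)"

(* m vectors in F_q[u]^n, each with |x_i| < q^B (so for B <= 0 only zero) *)
definition vecs_bounded :: "nat \<Rightarrow> nat \<Rightarrow> int \<Rightarrow> (nat \<Rightarrow> nat \<Rightarrow> 'a::zero poly) \<Rightarrow> bool" where
  "vecs_bounded m n B Xv \<longleftrightarrow>
     (\<forall>i j. (m \<le> i \<or> n \<le> j) \<longrightarrow> Xv i j = 0) \<and>
     (\<forall>i<m. \<forall>j<n. Xv i j = 0 \<or> int (degree (Xv i j)) < B)"

definition count_N ::
  "nat \<Rightarrow> nat \<Rightarrow> nat \<Rightarrow> (nat list \<Rightarrow> nat list \<Rightarrow> 'a::comm_ring_1) \<Rightarrow> (int \<Rightarrow> 'a)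
     \<Rightarrow> int \<Rightarrow> int \<Rightarrow> int \<Rightarrow> nat" where
  "count_N n d1 d2 Gc \<alpha> B1 B2 E = card {(Xv, Yv).
      vecs_bounded d1 n B1 Xv \<and> vecs_bounded (d2 - 1) n B2 Yv \<and>
      (\<forall>i<n. fnorm_lt \<alpha> (GammaG n d1 d2 Gc Xv (ext_unit d2 Yv i)) E)}"

definition N2_0 ::
  "nat \<Rightarrow> nat \<Rightarrow> nat \<Rightarrow> (nat list \<Rightarrow> nat list \<Rightarrow> 'a::comm_ring_1) \<Rightarrow> int \<Rightarrow> int \<Rightarrow> (int \<Rightarrow> 'a) \<Rightarrow> nat" where
  "N2_0 n d1 d2 Gc P1 P2 \<alpha> = count_N n d1 d2 Gc \<alpha> P1 P2 (- P2)"

definition N1_d1 ::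
  "nat \<Rightarrow> nat \<Rightarrow> nat \<Rightarrow> (nat list \<Rightarrow> nat list \<Rightarrow> 'a::comm_ring_1) \<Rightarrow> int \<Rightarrow> int \<Rightarrow> int \<Rightarrow> int
     \<Rightarrow> (int \<Rightarrow> 'a) \<Rightarrow> nat" where
  "N1_d1 n d1 d2 Gc P1 P2 Q1 Q2 \<alpha> =
     count_N n d1 d2 Gc \<alpha> (Q1 + P1) (Q2 + P2) (int d1 * Q1 + (int d2 - 1) * Q2 - P2)"

end

theory Submission
  imports Defs
begin



lemma ser_upto:
  fixes g :: "'a::comm_ring_1 poly"
  assumes "\<forall>j\<ge>N. coeff g j = 0"
  shows "ser_poly_mult \<alpha> g k = (\<Sum>j<N. coeff g j * \<alpha> (k - int j))"
proof -
  define M where "M = max N (Suc (degree g))"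
  have "(\<Sum>j<N. coeff g j * \<alpha> (k - int j)) = (\<Sum>j<M. coeff g j * \<alpha> (k - int j))"
    by (rule sum.mono_neutral_left) (auto simp: assms M_def)
  moreover have "(\<Sum>j\<le>degree g. coeff g j * \<alpha> (k - int j)) = (\<Sum>j<M. coeff g j * \<alpha> (k - int j))"
    by (rule sum.mono_neutral_left) (auto simp: M_def coeff_eq_0)
  ultimately show ?thesis unfolding ser_poly_mult_def by simp
qed

lemma ser_upto':
  fixes g :: "'a::comm_ring_1 poly"
  assumes "degree g < N"
  shows "ser_poly_mult \<alpha> g k = (\<Sum>j<N. coeff g j * \<alpha> (k - int j))"
  using assms by (intro ser_upto) (auto simp: coeff_eq_0)

lemma ser_add: fixes g h :: "'a::comm_ring_1 poly" shows "ser_poly_mult \<alpha> (g + h) k = ser_poly_mult \<alpha> g k + ser_poly_mult \<alpha> h k"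
proof -
  define N where "N = Suc (max (degree g) (degree h))"
  have "degree (g+h) < N" using degree_add_le_max[of g h] by (auto simp: N_def)
  then show ?thesis
    by (simp add: ser_upto'[of _ N] N_def sum.distrib algebra_simps)
qed

lemma ser_smult: fixes g :: "'a::comm_ring_1 poly" shows "ser_poly_mult \<alpha> (smult a g) k = a * ser_poly_mult \<alpha> g k"
proof -
  have "degree (smult a g) < Suc (degree g)" using degree_smult_le[of a g] by simp
  then show ?thesis
    by (simp add: ser_upto'[of _ "Suc (degree g)"] sum_distrib_left algebra_simps)
qed

lemma ser_zero[simp]: "ser_poly_mult \<alpha> 0 k = 0"
  by (simp add: ser_poly_mult_def)

lemma ser_sum: fixes f :: "_ \<Rightarrow> 'a::comm_ring_1 poly" shows "ser_poly_mult \<alpha> (\<Sum>i\<in>I. f i) k = (\<Sum>i\<in>I. ser_poly_mult \<alpha> (f i) k)"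
  by (induction I rule: infinite_finite_induct) (auto simp: ser_add)

lemma ser_neg: fixes g :: "'a::comm_ring_1 poly" shows "ser_poly_mult \<alpha> (- g) k = - ser_poly_mult \<alpha> g k"
  using ser_smult[of \<alpha> "-1" g k] by (simp add: smult_minus_left[symmetric])

lemma ser_diff: fixes g h :: "'a::comm_ring_1 poly" shows "ser_poly_mult \<alpha> (g - h) k = ser_poly_mult \<alpha> g k - ser_poly_mult \<alpha> h k"
  using ser_add[of \<alpha> g "-h" k] ser_neg[of \<alpha> h k] by simp

lemma ser_pCons: fixes g :: "'a::comm_ring_1 poly" shows "ser_poly_mult \<alpha> (pCons a g) k = a * \<alpha> k + ser_poly_mult \<alpha> g (k - 1)"
proof -
  have d: "degree (pCons a g) < Suc (Suc (degree g))" using degree_pCons_le[of a g] by simp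
  have "ser_poly_mult \<alpha> (pCons a g) k = (\<Sum>j<Suc (Suc (degree g)). coeff (pCons a g) j * \<alpha> (k - int j))"
    by (rule ser_upto'[OF d])
  also have "\<dots> = a * \<alpha> k + (\<Sum>j<Suc (degree g). coeff g j * \<alpha> (k - 1 - int j))"
    by (subst sum.lessThan_Suc_shift) (simp add: algebra_simps)
  also have "(\<Sum>j<Suc (degree g). coeff g j * \<alpha> (k - 1 - int j)) = ser_poly_mult \<alpha> g (k - 1)"
    by (rule ser_upto'[symmetric]) simp
  finally show ?thesis .
qed

lemma ser_mult:
  fixes p h :: "'a::comm_ring_1 poly" shows
  "\<forall>k\<ge>N. coeff p k = 0 \<Longrightarrow>
   ser_poly_mult \<alpha> (p * h) r = (\<Sum>k<N. coeff p k * ser_poly_mult \<alpha> h (r - int k))"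
proof (induction p arbitrary: N r)
  case 0
  then show ?case by simp
next
  case (pCons a p)
  show ?case
  proof (cases N)
    case 0
    then have z: "\<forall>k. coeff (pCons a p) k = 0" using pCons.prems by auto
    have "a = 0" using z[rule_format, of 0] by simp
    moreover have "p = 0"
      by (rule poly_eqI) (use z[rule_format, of "Suc _"] in simp)
    ultimately have "a = 0 \<and> p = 0" by simp
    then show ?thesis using pCons.hyps by simp
  next
    case (Suc N')
    have h: "\<forall>k\<ge>N'. coeff p k = 0" using pCons.prems Suc by auto
    have "ser_poly_mult \<alpha> (pCons a p * h) r = a * ser_poly_mult \<alpha> h r + ser_poly_mult \<alpha> (p * h) (r - 1)"
      by (simp add: ser_add ser_smult ser_pCons)
    also have "\<dots> = a * ser_poly_mult \<alpha> h r + (\<Sum>k<N'. coeff p k * ser_poly_mult \<alpha> h (r - 1 - int k))"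
      using pCons.IH[OF h] by simp
    also have "\<dots> = (\<Sum>k<N. coeff (pCons a p) k * ser_poly_mult \<alpha> h (r - int k))"
      unfolding Suc by (subst sum.lessThan_Suc_shift) (simp add: algebra_simps)
    finally show ?thesis .
  qed
qed




lemma fiber_bound:
  fixes S :: "'v set" and K :: "'v set" and \<Phi> :: "'v \<Rightarrow> 'w" and sub :: "'v \<Rightarrow> 'v \<Rightarrow> 'v"
  assumes fin: "finite S" and finK: "finite K"
    and closed: "\<And>x y. x\<in>S \<Longrightarrow> y\<in>S \<Longrightarrow> \<Phi> x = \<Phi> y \<Longrightarrow> sub x y \<in> K"
    and cancel: "\<And>x y r. x\<in>S \<Longrightarrow> y\<in>S \<Longrightarrow> r\<in>S \<Longrightarrow> sub x r = sub y r \<Longrightarrow> x = y"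
  shows "card S \<le> card (\<Phi> ` S) * card K"
proof -
  define rep where "rep w = (SOME x. x \<in> S \<and> \<Phi> x = w)" for w
  have rep: "rep (\<Phi> x) \<in> S \<and> \<Phi> (rep (\<Phi> x)) = \<Phi> x" if "x \<in> S" for x
    unfolding rep_def by (rule someI[of _ x]) (use that in auto)
  define f where "f x = (\<Phi> x, sub x (rep (\<Phi> x)))" for x
  have "inj_on f S"
  proof (rule inj_onI)
    fix x y assume xy: "x \<in> S" "y \<in> S" "f x = f y"
    then have e: "\<Phi> x = \<Phi> y" "sub x (rep (\<Phi> x)) = sub y (rep (\<Phi> x))" by (auto simp: f_def)
    show "x = y" by (rule cancel[OF xy(1,2) _ e(2)]) (use rep[OF xy(1)] in auto)
  qed
  moreover have "f ` S \<subseteq> \<Phi> ` S \<times> K"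
    using rep closed by (auto simp: f_def)
  ultimately have "card S \<le> card (\<Phi> ` S \<times> K)"
    using card_inj_on_le fin finK by blast
  then show ?thesis by (simp add: card_cartesian_product)
qed

definition supp_lt :: "nat \<Rightarrow> (nat \<Rightarrow> 'a::zero) set" where
  "supp_lt n = {u. \<forall>i\<ge>n. u i = 0}"

definition perp :: "nat \<Rightarrow> (nat \<Rightarrow> 'a::comm_ring_1) set \<Rightarrow> (nat \<Rightarrow> 'a) set" where
  "perp n U = {y \<in> supp_lt n. \<forall>u\<in>U. (\<Sum>i<n. u i * y i) = 0}"

lemma finite_supp_lt: "finite (supp_lt n :: (nat \<Rightarrow> 'a::{finite,zero}) set)"
proof -
  have "supp_lt n = {f :: nat \<Rightarrow> 'a. \<forall>x. (x \<in> {..<n} \<longrightarrow> f x \<in> UNIV) \<and> (x \<notin> {..<n} \<longrightarrow> f x = 0)}"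
    by (auto simp: supp_lt_def)
  then show ?thesis using finite_set_of_finite_funs[of "{..<n}" "UNIV :: 'a set" 0] by simp
qed

lemma dot_perp:
  fixes U :: "(nat \<Rightarrow> 'a::{finite,field}) set"
  assumes "U \<subseteq> supp_lt n"
    and "\<And>u v. u \<in> U \<Longrightarrow> v \<in> U \<Longrightarrow> (\<lambda>i. u i + v i) \<in> U"
    and "\<And>c u. u \<in> U \<Longrightarrow> (\<lambda>i. c * u i) \<in> U"
  shows "card U * card (perp n U) \<le> card (UNIV :: 'a set) ^ n"
  using assms
proof (induction n arbitrary: U)
  case 0
  have s: "supp_lt 0 = {(\<lambda>_. 0) :: nat \<Rightarrow> 'a}" by (auto simp: supp_lt_def)
  have "card U \<le> card (supp_lt 0 :: (nat \<Rightarrow> 'a) set)" by (rule card_mono[OF finite_supp_lt 0(1)])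
  then have "card U \<le> 1" using s by simp
  moreover have "card (perp 0 U) \<le> 1"
  proof -
    have "perp 0 U \<subseteq> supp_lt 0" by (auto simp: perp_def)
    then have "card (perp 0 U) \<le> card (supp_lt 0 :: (nat \<Rightarrow> 'a) set)" by (rule card_mono[OF finite_supp_lt])
    then show ?thesis using s by simp
  qed
  ultimately show ?case using mult_le_mono[of "card U" 1 "card (perp 0 U)" 1] by simp
next
  case (Suc n)
  let ?q = "card (UNIV :: 'a set)"
  have finU: "finite U" using Suc.prems(1) finite_supp_lt finite_subset by blast
  have finP: "finite (perp m V)" for m and V :: "(nat \<Rightarrow> 'a) set"
    using finite_supp_lt[of m] by (rule finite_subset[rotated]) (auto simp: perp_def)
  show ?case
  proof (cases "\<forall>u\<in>U. u n = 0")
    case True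
    have Un: "U \<subseteq> supp_lt n"
    proof
      fix x assume x: "x \<in> U"
      { fix i assume "n \<le> i"
        then have "x i = 0" using True Suc.prems(1) x by (cases "i = n") (auto simp: supp_lt_def) }
      then show "x \<in> supp_lt n" by (simp add: supp_lt_def)
    qed
    have IH: "card U * card (perp n U) \<le> ?q ^ n" by (rule Suc.IH[OF Un Suc.prems(2,3)])
    have "card (perp (Suc n) U) \<le> card ((UNIV :: 'a set) \<times> perp n U)"
    proof (rule card_inj_on_le[where f = "\<lambda>y. (y n, y(n := 0))"])
      show "inj_on (\<lambda>y. (y n, y(n := 0))) (perp (Suc n) U)"
        by (rule inj_onI) (metis fun_upd_triv fun_upd_upd prod.inject)
      show "(\<lambda>y. (y n, y(n := 0))) ` perp (Suc n) U \<subseteq> UNIV \<times> perp n U"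
      proof clarsimp
        fix y assume y: "y \<in> perp (Suc n) U"
        show "y(n := 0) \<in> perp n U"
          unfolding perp_def
        proof safe
          show "y(n := 0) \<in> supp_lt n" using y by (auto simp: perp_def supp_lt_def)
          fix u assume u: "u \<in> U"
          have "(\<Sum>i<n. u i * (y(n := 0)) i) = (\<Sum>i<Suc n. u i * y i)"
            using True u by simp
          also have "\<dots> = 0" using y u by (auto simp: perp_def)
          finally show "(\<Sum>i<n. u i * (y(n := 0)) i) = 0" .
        qed
      qed
      show "finite ((UNIV :: 'a set) \<times> perp n U)" using finP[of n U] by simp
    qed
    then have "card (perp (Suc n) U) \<le> ?q * card (perp n U)" by (simp add: card_cartesian_product)
    then have "card U * card (perp (Suc n) U) \<le> ?q * (card U * card (perp n U))"
      by (metis mult.left_commute mult_le_mono2)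
    also have "\<dots> \<le> ?q * ?q ^ n" using IH by simp
    finally show ?thesis by simp
  next
    case False
    then obtain u0 where u0: "u0 \<in> U" "u0 n \<noteq> 0" by auto
    define u1 where "u1 = (\<lambda>i. inverse (u0 n) * u0 i)"
    have u1: "u1 \<in> U" "u1 n = 1" using u0 Suc.prems(3) by (auto simp: u1_def)
    define U0 where "U0 = {u \<in> U. u n = 0}"
    have U0n: "U0 \<subseteq> supp_lt n"
    proof
      fix x assume x: "x \<in> U0"
      { fix i assume "n \<le> i"
        then have "x i = 0" using Suc.prems(1) x by (cases "i = n") (auto simp: supp_lt_def U0_def) }
      then show "x \<in> supp_lt n" by (simp add: supp_lt_def)
    qed
    have IH: "card U0 * card (perp n U0) \<le> ?q ^ n"
      by (rule Suc.IH[OF U0n]) (auto simp: U0_def intro: Suc.prems(2,3))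
    have finU0: "finite U0" using finU by (auto simp: U0_def)
    have c1: "card U \<le> ?q * card U0"
    proof -
      have "card U \<le> card ((UNIV :: 'a set) \<times> U0)"
      proof (rule card_inj_on_le[where f = "\<lambda>u. (u n, \<lambda>i. u i + (- u n) * u1 i)"])
        show "inj_on (\<lambda>u. (u n, \<lambda>i. u i + (- u n) * u1 i)) U"
        proof (rule inj_onI)
          fix u v assume "(u n, \<lambda>i. u i + (- u n) * u1 i) = (v n, \<lambda>i. v i + (- v n) * u1 i)"
          then have "u n = v n" "\<And>i. u i + (- u n) * u1 i = v i + (- v n) * u1 i" by (auto dest: fun_cong)
          then show "u = v" by auto
        qed
        show "(\<lambda>u. (u n, \<lambda>i. u i + (- u n) * u1 i)) ` U \<subseteq> UNIV \<times> U0"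
        proof -
          { fix u assume u: "u \<in> U"
            have "(\<lambda>i. u i + (- u n) * u1 i) \<in> U"
              by (rule Suc.prems(2)[OF u Suc.prems(3)[OF u1(1)]])
            then have "(\<lambda>i. u i + (- u n) * u1 i) \<in> U0" using u1(2) by (simp add: U0_def) }
          then show ?thesis by blast
        qed
        show "finite ((UNIV :: 'a set) \<times> U0)" using finU0 by simp
      qed
      then show ?thesis by (simp add: card_cartesian_product)
    qed
    have c2: "card (perp (Suc n) U) \<le> card (perp n U0)"
    proof (rule card_inj_on_le[where f = "\<lambda>y. y(n := 0)"])
      show "inj_on (\<lambda>y. y(n := 0)) (perp (Suc n) U)"
      proof (rule inj_onI)
        fix y y' assume y: "y \<in> perp (Suc n) U" and y': "y' \<in> perp (Suc n) U" and e: "y(n := 0) = y'(n := 0)"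
        have lt: "y i = y' i" if "i < n" for i using e that by (metis fun_upd_other less_irrefl)
        have "(\<Sum>i<Suc n. u1 i * y i) = 0" "(\<Sum>i<Suc n. u1 i * y' i) = 0"
          using y y' u1 by (auto simp: perp_def)
        then have "y n = y' n" using lt u1(2) by (simp add: eq_neg_iff_add_eq_0[symmetric])
        then show "y = y'" using e by (metis fun_upd_triv fun_upd_upd)
      qed
      show "(\<lambda>y. y(n := 0)) ` perp (Suc n) U \<subseteq> perp n U0"
      proof clarsimp
        fix y assume y: "y \<in> perp (Suc n) U"
        show "y(n := 0) \<in> perp n U0"
          unfolding perp_def
        proof safe
          show "y(n := 0) \<in> supp_lt n" using y by (auto simp: perp_def supp_lt_def)
          fix u assume u: "u \<in> U0"
          have "(\<Sum>i<n. u i * (y(n := 0)) i) = (\<Sum>i<Suc n. u i * y i)"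
            using u by (simp add: U0_def)
          also have "\<dots> = 0" using y u by (auto simp: perp_def U0_def)
          finally show "(\<Sum>i<n. u i * (y(n := 0)) i) = 0" .
        qed
      qed
      show "finite (perp n U0)" by (rule finP)
    qed
    have "card U * card (perp (Suc n) U) \<le> (?q * card U0) * card (perp n U0)"
      using c1 c2 by (rule mult_le_mono)
    also have "\<dots> \<le> ?q * ?q ^ n" using IH by (simp add: mult.assoc)
    finally show ?thesis by simp
  qed
qed

lemma lagrangian:
  fixes W :: "((nat \<Rightarrow> 'a::{finite,field}) \<times> (nat \<Rightarrow> 'a)) set"
  assumes sub: "W \<subseteq> supp_lt n \<times> supp_lt n"
    and add: "\<And>w v. w \<in> W \<Longrightarrow> v \<in> W \<Longrightarrow> ((\<lambda>i. fst w i + fst v i), (\<lambda>i. snd w i + snd v i)) \<in> W"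
    and scal: "\<And>c w. w \<in> W \<Longrightarrow> ((\<lambda>i. c * fst w i), (\<lambda>i. c * snd w i)) \<in> W"
    and iso: "\<And>w v. w \<in> W \<Longrightarrow> v \<in> W \<Longrightarrow> (\<Sum>i<n. fst w i * snd v i) = (\<Sum>i<n. fst v i * snd w i)"
  shows "card W \<le> card (UNIV :: 'a set) ^ n"
proof -
  have finW: "finite W" using sub finite_supp_lt by (metis finite_SigmaI finite_subset)
  define K where "K = {w \<in> W. fst w = (\<lambda>_. 0)}"
  define sb where "sb w v = ((\<lambda>i. fst w i + (-1) * fst v i), (\<lambda>i. snd w i + (-1) * snd v i))"
    for w v :: "(nat \<Rightarrow> 'a) \<times> (nat \<Rightarrow> 'a)"
  have "card W \<le> card (fst ` W) * card K"
  proof (rule fiber_bound[where sub = sb])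
    show "finite W" by (rule finW)
    show "finite K" using finW by (simp add: K_def)
    fix x y assume xy: "x \<in> W" "y \<in> W"
    { assume "fst x = fst y"
      moreover have "sb x y \<in> W" unfolding sb_def using add[OF xy(1) scal[OF xy(2), of "-1"]] by simp
      ultimately show "sb x y \<in> K" by (auto simp: K_def sb_def)
    }
    fix r assume "sb x r = sb y r"
    then have "\<And>i. fst x i + - fst r i = fst y i + - fst r i" "\<And>i. snd x i + - snd r i = snd y i + - snd r i"
      by (auto simp: sb_def dest!: fun_cong)
    then show "x = y" by (metis add_right_cancel ext prod.expand)
  qed
  also have "card K \<le> card (perp n (fst ` W))"
  proof (rule card_inj_on_le[where f = snd])
    show "inj_on snd K" by (rule inj_onI) (auto simp: K_def prod_eq_iff)
    show "snd ` K \<subseteq> perp n (fst ` W)"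
    proof clarify
      fix w assume w: "w \<in> K"
      show "snd w \<in> perp n (fst ` W)"
        unfolding perp_def
      proof safe
        show "snd w \<in> supp_lt n" using w sub by (auto simp: K_def)
        fix v assume "v \<in> W"
        then show "(\<Sum>i<n. fst v i * snd w i) = 0" using iso[of w v] w by (simp add: K_def)
      qed
    qed
    show "finite (perp n (fst ` W))"
      using finite_supp_lt[of n] by (rule finite_subset[rotated]) (auto simp: perp_def)
  qed
  then have "card (fst ` W) * card K \<le> card (fst ` W) * card (perp n (fst ` W))" by simp
  also have "\<dots> \<le> card (UNIV :: 'a set) ^ n"
  proof (rule dot_perp)
    show "fst ` W \<subseteq> supp_lt n" using sub by auto
    fix u v assume "u \<in> fst ` W" "v \<in> fst ` W"
    then obtain w w' where "w \<in> W" "w' \<in> W" "u = fst w" "v = fst w'" by auto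
    then show "(\<lambda>i. u i + v i) \<in> fst ` W" using add[of w w'] by force
  next
    fix c u assume "u \<in> fst ` W"
    then obtain w where "w \<in> W" "u = fst w" by auto
    then show "(\<lambda>i. c * u i) \<in> fst ` W" using scal[of w c] by force
  qed
  finally show ?thesis .
qed




lemma finite_polys: "finite {p :: 'a::{finite,zero} poly. degree p \<le> N}"
proof -
  have "{p :: 'a poly. degree p \<le> N} \<subseteq> Poly ` {xs. set xs \<subseteq> UNIV \<and> length xs = Suc N}"
  proof
    fix p :: "'a poly" assume p: "p \<in> {p. degree p \<le> N}"
    define xs where "xs = coeffs p @ replicate (Suc N - length (coeffs p)) 0"
    have "length (coeffs p) \<le> Suc N" using p by (cases "p = 0") (auto simp: length_coeffs_degree)
    then have "length xs = Suc N" by (simp add: xs_def)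
    moreover have "Poly xs = p" by (simp add: xs_def)
    ultimately show "p \<in> Poly ` {xs. set xs \<subseteq> UNIV \<and> length xs = Suc N}" by blast
  qed
  moreover have "finite {xs :: 'a list. set xs \<subseteq> UNIV \<and> length xs = Suc N}"
    by (rule finite_lists_length_eq) simp
  ultimately show ?thesis by (meson finite_imageI finite_subset)
qed

lemma finite_vecs:
  "finite {v :: nat \<Rightarrow> 'a::{finite,zero} poly. (\<forall>j. n \<le> j \<longrightarrow> v j = 0) \<and> (\<forall>j<n. degree (v j) \<le> N)}"
proof -
  have "{v :: nat \<Rightarrow> 'a poly. (\<forall>j. n \<le> j \<longrightarrow> v j = 0) \<and> (\<forall>j<n. degree (v j) \<le> N)}
     = {f. \<forall>x. (x \<in> {..<n} \<longrightarrow> f x \<in> {p. degree p \<le> N}) \<and> (x \<notin> {..<n} \<longrightarrow> f x = 0)}"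
  proof (rule Collect_cong)
    fix v :: "nat \<Rightarrow> 'a poly"
    show "((\<forall>j. n \<le> j \<longrightarrow> v j = 0) \<and> (\<forall>j<n. degree (v j) \<le> N)) =
        (\<forall>x. (x \<in> {..<n} \<longrightarrow> v x \<in> {p. degree p \<le> N}) \<and> (x \<notin> {..<n} \<longrightarrow> v x = 0))"
      by (auto simp: not_less)
  qed
  moreover have "finite {f. \<forall>x. (x \<in> {..<n} \<longrightarrow> f x \<in> {p :: 'a poly. degree p \<le> N}) \<and> (x \<notin> {..<n} \<longrightarrow> f x = 0)}"
    by (rule finite_set_of_finite_funs[OF finite_lessThan finite_polys])
  ultimately show ?thesis by simp
qed

definition Sset :: "nat \<Rightarrow> (int \<Rightarrow> 'a::comm_ring_1) \<Rightarrow> (nat \<Rightarrow> nat \<Rightarrow> 'a poly) \<Rightarrow> int \<Rightarrow> int \<Rightarrow> (nat \<Rightarrow> 'a poly) set" where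
  "Sset n \<alpha> g A B = {v. (\<forall>j. n \<le> j \<longrightarrow> v j = 0) \<and> (\<forall>j<n. v j = 0 \<or> int (degree (v j)) < A)
      \<and> (\<forall>i<n. fnorm_lt \<alpha> (\<Sum>j<n. v j * g i j) (- B))}"

lemma finite_Sset: "finite (Sset n (\<alpha> :: int \<Rightarrow> 'a::{finite,comm_ring_1}) g A B)"
proof (rule finite_subset[OF _ finite_vecs[of n "nat A"]])
  show "Sset n \<alpha> g A B \<subseteq> {v. (\<forall>j. n \<le> j \<longrightarrow> v j = 0) \<and> (\<forall>j<n. degree (v j) \<le> nat A)}"
    by (auto simp: Sset_def)
qed

lemma zero_in_Sset: "(\<lambda>_. 0) \<in> Sset n \<alpha> g A B"
  by (simp add: Sset_def fnorm_lt_def)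

lemma degree_drop:
  fixes p :: "'a::zero poly"
  assumes "p \<noteq> 0" "int (degree p) < A" "coeff p (nat (A - 1)) = 0"
  shows "int (degree p) < A - 1"
proof -
  have "coeff p (degree p) \<noteq> 0" using assms(1) by simp
  then have "degree p \<noteq> nat (A - 1)" using assms(3) by metis
  then show ?thesis using assms(2) by linarith
qed

lemma smult_sum_right: "smult c (\<Sum>i\<in>S. f i) = (\<Sum>i\<in>S. smult c (f i))"
  by (induct S rule: infinite_finite_induct) (simp_all add: smult_add_right)

lemma sum_mult_distrib_poly:
  fixes v w :: "nat \<Rightarrow> 'a::comm_ring_1 poly"
  shows "(\<Sum>j<n. (v j + w j) * g j) = (\<Sum>j<n. v j * g j) + (\<Sum>j<n. w j * g j)"
    and "(\<Sum>j<n. (v j - w j) * g j) = (\<Sum>j<n. v j * g j) - (\<Sum>j<n. w j * g j)"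
    and "(\<Sum>j<n. smult c (v j) * g j) = smult c (\<Sum>j<n. v j * g j)"
  by (simp_all add: sum.distrib sum_subtractf algebra_simps smult_sum_right)

lemma key_pairing:
  fixes v w :: "nat \<Rightarrow> 'a::comm_ring_1 poly"
  assumes A1: "1 \<le> A" and AB: "A \<le> B"
    and v: "v \<in> Sset n \<alpha> g A B" and w: "w \<in> Sset n \<alpha> g A B"
  shows "(\<Sum>i<n. coeff (v i) (nat (A - 1)) * ser_poly_mult \<alpha> (\<Sum>j<n. w j * g i j) (- B - 1))
       = ser_poly_mult \<alpha> (\<Sum>i<n. v i * (\<Sum>j<n. w j * g i j)) (A - B - 2)"
proof -
  define a where "a = nat (A - 1)"
  have NA: "nat A = Suc a" using A1 by (simp add: a_def)
  have "ser_poly_mult \<alpha> (\<Sum>i<n. v i * (\<Sum>j<n. w j * g i j)) (A - B - 2)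
      = (\<Sum>i<n. ser_poly_mult \<alpha> (v i * (\<Sum>j<n. w j * g i j)) (A - B - 2))"
    by (rule ser_sum)
  also have "\<dots> = (\<Sum>i<n. coeff (v i) a * ser_poly_mult \<alpha> (\<Sum>j<n. w j * g i j) (- B - 1))"
  proof (rule sum.cong[OF refl])
    fix i assume i: "i \<in> {..<n}"
    have cz: "\<forall>k\<ge>Suc a. coeff (v i) k = 0"
    proof (intro allI impI)
      fix k assume "Suc a \<le> k"
      have "v i = 0 \<or> int (degree (v i)) < A" using v i by (auto simp: Sset_def)
      then show "coeff (v i) k = 0" using \<open>Suc a \<le> k\<close> NA by (auto intro: coeff_eq_0)
    qed
    have "ser_poly_mult \<alpha> (v i * (\<Sum>j<n. w j * g i j)) (A - B - 2)
        = (\<Sum>k<Suc a. coeff (v i) k * ser_poly_mult \<alpha> (\<Sum>j<n. w j * g i j) (A - B - 2 - int k))"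
      by (rule ser_mult[OF cz])
    also have "\<dots> = coeff (v i) a * ser_poly_mult \<alpha> (\<Sum>j<n. w j * g i j) (A - B - 2 - int a)
         + (\<Sum>k<a. coeff (v i) k * ser_poly_mult \<alpha> (\<Sum>j<n. w j * g i j) (A - B - 2 - int k))"
      by simp
    also have "(\<Sum>k<a. coeff (v i) k * ser_poly_mult \<alpha> (\<Sum>j<n. w j * g i j) (A - B - 2 - int k)) = 0"
    proof (rule sum.neutral, rule ballI)
      fix k assume k: "k \<in> {..<a}"
      have "fnorm_lt \<alpha> (\<Sum>j<n. w j * g i j) (- B)" using w i by (auto simp: Sset_def)
      moreover have "- B \<le> A - B - 2 - int k" "A - B - 2 - int k \<le> -1" using k AB by (auto simp: a_def)
      ultimately show "coeff (v i) k * ser_poly_mult \<alpha> (\<Sum>j<n. w j * g i j) (A - B - 2 - int k) = 0"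
        by (simp add: fnorm_lt_def)
    qed
    also have "A - B - 2 - int a = - B - 1" using A1 by (simp add: a_def)
    finally show "ser_poly_mult \<alpha> (v i * (\<Sum>j<n. w j * g i j)) (A - B - 2)
        = coeff (v i) a * ser_poly_mult \<alpha> (\<Sum>j<n. w j * g i j) (- B - 1)" by simp
  qed
  finally show ?thesis by (simp add: a_def)
qed

lemma bilin_sym:
  fixes v w :: "nat \<Rightarrow> 'a::comm_ring_1 poly"
  assumes sym: "\<forall>i<n. \<forall>j<n. g i j = g j i"
  shows "(\<Sum>i<n. v i * (\<Sum>j<n. w j * g i j)) = (\<Sum>i<n. w i * (\<Sum>j<n. v j * g i j))"
proof -
  have "(\<Sum>i<n. v i * (\<Sum>j<n. w j * g i j)) = (\<Sum>i<n. \<Sum>j<n. v i * w j * g i j)"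
    by (simp add: sum_distrib_left mult.assoc)
  also have "\<dots> = (\<Sum>j<n. \<Sum>i<n. v i * w j * g i j)" by (rule sum.swap)
  also have "\<dots> = (\<Sum>j<n. \<Sum>i<n. w j * (v i * g j i))"
    using sym by (intro sum.cong refl) (auto simp: mult_ac)
  also have "\<dots> = (\<Sum>i<n. w i * (\<Sum>j<n. v j * g i j))"
    by (simp add: sum_distrib_left)
  finally show ?thesis .
qed




lemma deg_add_lt:
  fixes p q :: "'a::comm_ring_1 poly"
  assumes "p = 0 \<or> int (degree p) < A" "q = 0 \<or> int (degree q) < A"
  shows "p + q = 0 \<or> int (degree (p + q)) < A" and "p - q = 0 \<or> int (degree (p - q)) < A"
proof -
  have m: "degree (p + q) \<le> max (degree p) (degree q)" "degree (p - q) \<le> max (degree p) (degree q)"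
    by (rule degree_add_le_max, rule degree_diff_le_max)
  show "p + q = 0 \<or> int (degree (p + q)) < A"
    using assms m(1) by (cases "p = 0"; cases "q = 0") auto
  show "p - q = 0 \<or> int (degree (p - q)) < A"
    using assms m(2) by (cases "p = 0"; cases "q = 0") auto
qed

lemma deg_smult_lt:
  fixes p :: "'a::comm_ring_1 poly"
  assumes "p = 0 \<or> int (degree p) < A"
  shows "smult c p = 0 \<or> int (degree (smult c p)) < A"
  using assms degree_smult_le[of c p] by (cases "p = 0") auto


lemma core:
  fixes \<alpha> :: "int \<Rightarrow> 'a::{finite,field}" and g :: "nat \<Rightarrow> nat \<Rightarrow> 'a poly"
  assumes sym: "\<forall>i<n. \<forall>j<n. g i j = g j i" and AB: "A \<le> B"
  shows "card (Sset n \<alpha> g A B) \<le> card (UNIV :: 'a set) ^ n * card (Sset n \<alpha> g (A - 1) (B + 1))"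
proof (cases "A \<le> 0")
  case True
  have "Sset n \<alpha> g A B \<subseteq> {\<lambda>_. 0}"
  proof
    fix v assume v: "v \<in> Sset n \<alpha> g A B"
    have "v j = 0" for j using v True by (cases "n \<le> j") (auto simp: Sset_def)
    then show "v \<in> {\<lambda>_. 0}" by auto
  qed
  then have "card (Sset n \<alpha> g A B) \<le> card {(\<lambda>_. 0) :: nat \<Rightarrow> 'a poly}"
    by (intro card_mono) auto
  then have c1: "card (Sset n \<alpha> g A B) \<le> 1" by simp
  have "Sset n \<alpha> g (A - 1) (B + 1) \<noteq> {}" using zero_in_Sset by blast
  then have c2: "1 \<le> card (Sset n \<alpha> g (A - 1) (B + 1))"
    using finite_Sset[of n \<alpha> g "A - 1" "B + 1"] by (simp add: Suc_le_eq card_gt_0_iff)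
  have "0 < card (UNIV :: 'a set)" by (simp add: card_gt_0_iff)
  then have c3: "1 \<le> card (UNIV :: 'a set) ^ n" by (simp add: Suc_le_eq)
  have "1 * 1 \<le> card (UNIV :: 'a set) ^ n * card (Sset n \<alpha> g (A - 1) (B + 1))"
    by (rule mult_le_mono[OF c3 c2])
  then show ?thesis using c1 by linarith
next
  case False
  then have A1: "1 \<le> A" by simp
  define a where "a = nat (A - 1)"
  define S where "S = Sset n \<alpha> g A B"
  define K where "K = Sset n \<alpha> g (A - 1) (B + 1)"
  define \<tau> where "\<tau> v = (\<lambda>i. if i < n then coeff (v i) a else 0)" for v :: "nat \<Rightarrow> 'a poly"
  define \<sigma> where "\<sigma> v = (\<lambda>i. if i < n then ser_poly_mult \<alpha> (\<Sum>j<n. v j * g i j) (- B - 1) else 0)"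
    for v :: "nat \<Rightarrow> 'a poly"
  define \<Phi> where "\<Phi> v = (\<tau> v, \<sigma> v)" for v
  have Sadd: "(\<lambda>j. v j + w j) \<in> S" if "v \<in> S" "w \<in> S" for v w
  proof -
    have "v j + w j = 0 \<or> int (degree (v j + w j)) < A" if "j < n" for j
      using \<open>v \<in> S\<close> \<open>w \<in> S\<close> that by (intro deg_add_lt(1)) (auto simp: S_def Sset_def)
    then show ?thesis using that
      by (auto simp: S_def Sset_def fnorm_lt_def sum_mult_distrib_poly ser_add)
  qed
  have Ssmult: "(\<lambda>j. smult c (v j)) \<in> S" if "v \<in> S" for v c
  proof -
    have "smult c (v j) = 0 \<or> int (degree (smult c (v j))) < A" if "j < n" for j
      using \<open>v \<in> S\<close> that by (intro deg_smult_lt) (auto simp: S_def Sset_def)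
    then show ?thesis using that
      by (auto simp: S_def Sset_def fnorm_lt_def sum_mult_distrib_poly ser_smult smult_sum_right[symmetric])
  qed
  have finS: "finite S" and finK: "finite K" by (simp_all add: S_def K_def finite_Sset)
  have "card S \<le> card (\<Phi> ` S) * card K"
  proof (rule fiber_bound[where sub = "\<lambda>v w j. v j - w j"])
    show "finite S" "finite K" by (rule finS, rule finK)
    fix x y assume x: "x \<in> S" and y: "y \<in> S" 
    { assume e: "\<Phi> x = \<Phi> y"
      have e1: "\<tau> x = \<tau> y" and e2: "\<sigma> x = \<sigma> y" using e by (simp_all add: \<Phi>_def)
      have et: "coeff (x j) a = coeff (y j) a" if "j < n" for j
        using fun_cong[OF e1, of j] that by (simp add: \<tau>_def)
      have es: "ser_poly_mult \<alpha> (\<Sum>j<n. x j * g i j) (- B - 1) = ser_poly_mult \<alpha> (\<Sum>j<n. y j * g i j) (- B - 1)"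
        if "i < n" for i
        using fun_cong[OF e2, of i] that by (simp add: \<sigma>_def)
      show "(\<lambda>j. x j - y j) \<in> K"
        unfolding K_def Sset_def
      proof (intro CollectI conjI allI impI)
        fix j assume "n \<le> j" then show "x j - y j = 0" using x y by (simp add: S_def Sset_def)
      next
        fix j assume j: "j < n"
        have d: "x j - y j = 0 \<or> int (degree (x j - y j)) < A"
          using x y j by (intro deg_add_lt(2)) (auto simp: S_def Sset_def)
        show "x j - y j = 0 \<or> int (degree (x j - y j)) < A - 1"
        proof (cases "x j - y j = 0")
          case False
          then show ?thesis using d degree_drop[of "x j - y j" A] et[OF j] by (simp add: a_def)
        qed simp
      next
        fix i assume i: "i < n"
        show "fnorm_lt \<alpha> (\<Sum>j<n. (x j - y j) * g i j) (- (B + 1))"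
          unfolding fnorm_lt_def sum_mult_distrib_poly ser_diff
        proof (intro allI impI)
          fix k assume k: "- (B + 1) \<le> k \<and> k \<le> -1"
          show "ser_poly_mult \<alpha> (\<Sum>j<n. x j * g i j) k - ser_poly_mult \<alpha> (\<Sum>j<n. y j * g i j) k = 0"
          proof (cases "k = - B - 1")
            case True then show ?thesis using es[OF i] by simp
          next
            case False
            then have "- B \<le> k" using k by simp
            then show ?thesis using x y i k by (auto simp: S_def Sset_def fnorm_lt_def)
          qed
        qed
      qed
    }
    fix r assume "(\<lambda>j. x j - r j) = (\<lambda>j. y j - r j)"
    note eq = this
    show "x = y"
    proof (rule ext)
      fix j show "x j = y j" using fun_cong[OF eq, of j] by simp
    qed
  qed
  also have "card (\<Phi> ` S) \<le> card (UNIV :: 'a set) ^ n"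
  proof (rule lagrangian)
    show "\<Phi> ` S \<subseteq> supp_lt n \<times> supp_lt n" by (auto simp: \<Phi>_def \<tau>_def \<sigma>_def supp_lt_def)
  next
    fix w v assume "w \<in> \<Phi> ` S" "v \<in> \<Phi> ` S"
    then obtain x y where xy: "x \<in> S" "y \<in> S" "w = \<Phi> x" "v = \<Phi> y" by auto
    have "\<Phi> (\<lambda>j. x j + y j) = ((\<lambda>i. fst w i + fst v i), (\<lambda>i. snd w i + snd v i))"
      using xy by (auto simp: \<Phi>_def \<tau>_def \<sigma>_def sum_mult_distrib_poly ser_add)
    then show "((\<lambda>i. fst w i + fst v i), (\<lambda>i. snd w i + snd v i)) \<in> \<Phi> ` S"
      using Sadd[OF xy(1,2)] by (metis image_eqI)
    have "(\<Sum>i<n. fst w i * snd v i) = (\<Sum>i<n. coeff (x i) (nat (A - 1)) * ser_poly_mult \<alpha> (\<Sum>j<n. y j * g i j) (- B - 1))"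
      using xy by (simp add: \<Phi>_def \<tau>_def \<sigma>_def a_def)
    also have "\<dots> = ser_poly_mult \<alpha> (\<Sum>i<n. x i * (\<Sum>j<n. y j * g i j)) (A - B - 2)"
      by (rule key_pairing[OF A1 AB]) (use xy in \<open>simp_all add: S_def\<close>)
    also have "\<dots> = ser_poly_mult \<alpha> (\<Sum>i<n. y i * (\<Sum>j<n. x j * g i j)) (A - B - 2)"
      by (rule arg_cong[where f = "\<lambda>p. ser_poly_mult \<alpha> p (A - B - 2)"], rule bilin_sym[OF sym])
    also have "\<dots> = (\<Sum>i<n. coeff (y i) (nat (A - 1)) * ser_poly_mult \<alpha> (\<Sum>j<n. x j * g i j) (- B - 1))"
      by (rule key_pairing[OF A1 AB, symmetric]) (use xy in \<open>simp_all add: S_def\<close>)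
    also have "\<dots> = (\<Sum>i<n. fst v i * snd w i)"
      using xy by (simp add: \<Phi>_def \<tau>_def \<sigma>_def a_def)
    finally show "(\<Sum>i<n. fst w i * snd v i) = (\<Sum>i<n. fst v i * snd w i)" .
  next
    fix c w assume "w \<in> \<Phi> ` S"
    then obtain x where x: "x \<in> S" "w = \<Phi> x" by auto
    have "\<Phi> (\<lambda>j. smult c (x j)) = ((\<lambda>i. c * fst w i), (\<lambda>i. c * snd w i))"
      using x by (simp add: \<Phi>_def \<tau>_def \<sigma>_def fun_eq_iff ser_smult smult_sum_right[symmetric])
    then show "((\<lambda>i. c * fst w i), (\<lambda>i. c * snd w i)) \<in> \<Phi> ` S"
      using Ssmult[OF x(1)] by (metis image_eqI)
  qed
  finally have "card S \<le> card (UNIV :: 'a set) ^ n * card K" by simp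
  then show ?thesis by (simp add: S_def K_def)
qed




definition Gam :: "nat \<Rightarrow> nat \<Rightarrow> (nat list \<Rightarrow> 'a::comm_ring_1) \<Rightarrow> (nat \<Rightarrow> nat \<Rightarrow> 'a poly) \<Rightarrow> 'a poly" where
  "Gam d n c Z = (\<Sum>ls\<in>idx d n. smult (c ls) (\<Prod>t<d. Z t (ls ! t)))"

definition dlt :: "nat \<Rightarrow> nat \<Rightarrow> 'a::comm_ring_1 poly" where
  "dlt i = (\<lambda>j. if j = i then 1 else 0)"

lemma Gam_cong: "(\<And>t. t < d \<Longrightarrow> Z t = Z' t) \<Longrightarrow> Gam d n c Z = Gam d n c Z'"
  unfolding Gam_def by (intro sum.cong refl arg_cong[where f = "smult _"] prod.cong) auto

lemma prod_upd_split:
  assumes "s < d"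
  shows "(\<Prod>t<d. (Z(s := w)) t (ls ! t)) = w (ls ! s) * (\<Prod>t\<in>{..<d} - {s}. Z t (ls ! t))"
proof -
  have "(\<Prod>t<d. (Z(s := w)) t (ls ! t)) = (Z(s := w)) s (ls ! s) * (\<Prod>t\<in>{..<d} - {s}. (Z(s := w)) t (ls ! t))"
    using assms by (intro prod.remove) auto
  also have "(\<Prod>t\<in>{..<d} - {s}. (Z(s := w)) t (ls ! t)) = (\<Prod>t\<in>{..<d} - {s}. Z t (ls ! t))"
    by (intro prod.cong) auto
  finally show ?thesis by simp
qed

lemma Gam_lin:
  fixes Z :: "nat \<Rightarrow> nat \<Rightarrow> 'a::comm_ring_1 poly"
  assumes s: "s < d"
  shows "Gam d n c (Z(s := v)) = (\<Sum>j<n. v j * Gam d n c (Z(s := dlt j)))"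
proof -
  define R where "R ls = (\<Prod>t\<in>{..<d} - {s}. Z t (ls ! t))" for ls
  have ls_s: "ls ! s < n" if "ls \<in> idx d n" for ls
    using that s by (auto simp: idx_def)
  have "(\<Sum>j<n. v j * Gam d n c (Z(s := dlt j)))
      = (\<Sum>j<n. \<Sum>ls\<in>idx d n. v j * smult (c ls) (dlt j (ls ! s) * R ls))"
    unfolding Gam_def prod_upd_split[OF s] R_def[symmetric] by (simp only: sum_distrib_left)
  also have "\<dots> = (\<Sum>ls\<in>idx d n. \<Sum>j<n. v j * smult (c ls) (dlt j (ls ! s) * R ls))"
    by (rule sum.swap)
  also have "\<dots> = (\<Sum>ls\<in>idx d n. smult (c ls) (v (ls ! s) * R ls))"
  proof (rule sum.cong[OF refl])
    fix ls assume ls: "ls \<in> idx d n"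
    have "(\<Sum>j<n. v j * smult (c ls) (dlt j (ls ! s) * R ls))
        = (\<Sum>j\<in>{ls ! s}. v j * smult (c ls) (dlt j (ls ! s) * R ls))"
      using ls_s[OF ls] by (intro sum.mono_neutral_right) (auto simp: dlt_def)
    then show "(\<Sum>j<n. v j * smult (c ls) (dlt j (ls ! s) * R ls)) = smult (c ls) (v (ls ! s) * R ls)"
      by (simp add: dlt_def mult_smult_right)
  qed
  also have "\<dots> = Gam d n c (Z(s := v))"
    unfolding Gam_def prod_upd_split[OF s] R_def[symmetric] by (rule refl)
  finally show ?thesis by simp
qed

definition sw :: "nat \<Rightarrow> nat \<Rightarrow> nat \<Rightarrow> nat" where
  "sw s m t = (if t = s then m else if t = m then s else t)"

lemma sw_sw[simp]: "sw s m (sw s m t) = t"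
  by (auto simp: sw_def)

lemma Gam_swap:
  fixes Z :: "nat \<Rightarrow> nat \<Rightarrow> 'a::comm_ring_1 poly"
  assumes s: "s < d" and m: "m < d" and sym: "sym_coeffs d n c"
  shows "Gam d n c (\<lambda>t. Z (sw s m t)) = Gam d n c Z"
proof -
  define swl where "swl ls = ls[s := ls ! m, m := ls ! s]" for ls :: "nat list"
  have len: "length (swl ls) = length ls" for ls by (simp add: swl_def)
  have nth_swl: "swl ls ! t = ls ! (sw s m t)" if "length ls = d" "t < d" for ls t
    using that s m by (auto simp: swl_def sw_def nth_list_update)
  have swl_idx: "swl ls \<in> idx d n" if "ls \<in> idx d n" for ls
  proof -
    have "\<forall>i\<in>set (swl ls). i < n"
    proof
      fix i assume "i \<in> set (swl ls)"
      then obtain t where t0: "t < length (swl ls)" "i = swl ls ! t" by (auto simp: in_set_conv_nth)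
      then have t: "t < d" "i = swl ls ! t" using that len by (auto simp: idx_def)
      have "sw s m t < d" using t s m by (auto simp: sw_def)
      then show "i < n" using that t nth_swl[of ls t] by (auto simp: idx_def)
    qed
    then show ?thesis using that len by (simp add: idx_def)
  qed
  have swl_swl: "swl (swl ls) = ls" if "ls \<in> idx d n" for ls
  proof (rule nth_equalityI)
    show "length (swl (swl ls)) = length ls" by (simp add: len)
    fix t assume "t < length (swl (swl ls))"
    then have t: "t < d" using that by (simp add: len idx_def)
    have "sw s m t < d" using t s m by (auto simp: sw_def)
    then show "swl (swl ls) ! t = ls ! t"
      using nth_swl[of "swl ls" t] nth_swl[of ls "sw s m t"] that t by (simp add: len idx_def)
  qed
  have c_swl: "c (swl ls) = c ls" if "ls \<in> idx d n" for ls
  proof -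
    have "mset (swl ls) = mset ls" unfolding swl_def
      using that s m by (intro mset_swap) (auto simp: idx_def)
    then show ?thesis using sym swl_idx[OF that] that unfolding sym_coeffs_def by metis
  qed
  have bij_sw: "bij_betw (sw s m) {..<d} {..<d}"
    by (rule bij_betw_byWitness[where f' = "sw s m"]) (use s m in \<open>auto simp: sw_def\<close>)
  have prod_sw: "(\<Prod>t<d. Z (sw s m t) (ls ! t)) = (\<Prod>t<d. Z t (swl ls ! t))" if "ls \<in> idx d n" for ls
  proof -
    have "(\<Prod>t<d. Z t (swl ls ! t)) = (\<Prod>t<d. Z (sw s m t) (swl ls ! (sw s m t)))"
      using prod.reindex_bij_betw[OF bij_sw, of "\<lambda>t. Z t (swl ls ! t)"] by simp
    also have "\<dots> = (\<Prod>t<d. Z (sw s m t) (ls ! t))"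
    proof (rule prod.cong[OF refl])
      fix t assume "t \<in> {..<d}"
      moreover have "sw s m t < d" using \<open>t \<in> {..<d}\<close> s m by (auto simp: sw_def)
      ultimately show "Z (sw s m t) (swl ls ! sw s m t) = Z (sw s m t) (ls ! t)"
        using nth_swl[of ls "sw s m t"] that by (simp add: idx_def)
    qed
    finally show ?thesis by simp
  qed
  have "Gam d n c (\<lambda>t. Z (sw s m t)) = (\<Sum>ls\<in>idx d n. smult (c (swl ls)) (\<Prod>t<d. Z t (swl ls ! t)))"
    unfolding Gam_def using prod_sw c_swl by (intro sum.cong refl) auto
  also have "\<dots> = Gam d n c Z"
    unfolding Gam_def
    by (rule sum.reindex_bij_witness[where i = swl and j = swl]) (auto simp: swl_swl swl_idx)
  finally show ?thesis .
qed




definition Tset :: "nat \<Rightarrow> nat \<Rightarrow> (int \<Rightarrow> 'a::comm_ring_1) \<Rightarrow> (nat list \<Rightarrow> 'a) \<Rightarrow> (nat \<Rightarrow> int) \<Rightarrow> int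
    \<Rightarrow> (nat \<Rightarrow> nat \<Rightarrow> 'a poly) set" where
  "Tset m n \<alpha> c b E = {Z. (\<forall>t j. (m \<le> t \<or> n \<le> j) \<longrightarrow> Z t j = 0) \<and>
     (\<forall>t<m. \<forall>j<n. Z t j = 0 \<or> int (degree (Z t j)) < b t) \<and>
     (\<forall>i<n. fnorm_lt \<alpha> (Gam (Suc m) n c (Z(m := dlt i))) E)}"

definition Oset :: "nat \<Rightarrow> nat \<Rightarrow> (nat \<Rightarrow> int) \<Rightarrow> nat \<Rightarrow> (nat \<Rightarrow> nat \<Rightarrow> 'a::comm_ring_1 poly) set" where
  "Oset m n b s = {Z. Z s = (\<lambda>_. 0) \<and> (\<forall>t j. (m \<le> t \<or> n \<le> j) \<longrightarrow> Z t j = 0) \<and>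
     (\<forall>t<m. t \<noteq> s \<longrightarrow> (\<forall>j<n. Z t j = 0 \<or> int (degree (Z t j)) < b t))}"

definition gmat :: "nat \<Rightarrow> nat \<Rightarrow> (nat list \<Rightarrow> 'a::comm_ring_1) \<Rightarrow> (nat \<Rightarrow> nat \<Rightarrow> 'a poly) \<Rightarrow> nat
    \<Rightarrow> nat \<Rightarrow> nat \<Rightarrow> 'a poly" where
  "gmat m n c Z s = (\<lambda>i j. Gam (Suc m) n c ((Z(s := dlt j))(m := dlt i)))"

lemma Gam_fiber:
  fixes Z :: "nat \<Rightarrow> nat \<Rightarrow> 'a::comm_ring_1 poly"
  assumes "s < m"
  shows "Gam (Suc m) n c ((Z(s := v))(m := dlt i)) = (\<Sum>j<n. v j * gmat m n c Z s i j)"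
proof -
  have "(Z(s := v))(m := dlt i) = (Z(m := dlt i))(s := v)" using assms by (simp add: fun_upd_twist)
  moreover have "(Z(m := dlt i))(s := dlt j) = (Z(s := dlt j))(m := dlt i)" for j
    using assms by (simp add: fun_upd_twist)
  ultimately show ?thesis
    using Gam_lin[of s "Suc m" n c "Z(m := dlt i)" v] assms by (simp add: gmat_def)
qed

lemma fiber_char:
  fixes w0 :: "nat \<Rightarrow> nat \<Rightarrow> 'a::comm_ring_1 poly"
  assumes s: "s < m" and w0: "w0 \<in> Oset m n b s"
  shows "(w0(s := v) \<in> Tset m n \<alpha> c (b(s := A)) (- B)) = (v \<in> Sset n \<alpha> (gmat m n c w0 s) A B)"
proof -
  have F: "fnorm_lt \<alpha> (Gam (Suc m) n c ((w0(s := v))(m := dlt i))) (- B)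
         = fnorm_lt \<alpha> (\<Sum>j<n. v j * gmat m n c w0 s i j) (- B)" for i
    by (simp only: Gam_fiber[OF s])
  have sup: "(\<forall>t j. (m \<le> t \<or> n \<le> j) \<longrightarrow> (w0(s := v)) t j = 0) = (\<forall>j. n \<le> j \<longrightarrow> v j = 0)"
    using w0 s by (auto simp: Oset_def)
  have deg: "(\<forall>t<m. \<forall>j<n. (w0(s := v)) t j = 0 \<or> int (degree ((w0(s := v)) t j)) < (b(s := A)) t)
       = (\<forall>j<n. v j = 0 \<or> int (degree (v j)) < A)"
    using w0 s by (auto simp: Oset_def)
  show ?thesis
    unfolding Tset_def Sset_def mem_Collect_eq sup deg F by (rule refl)
qed

lemma T_decomp:
  fixes b :: "nat \<Rightarrow> int"
  assumes s: "s < m"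
  shows "Tset m n \<alpha> c (b(s := A)) (- B)
       = (\<lambda>(w0, v). w0(s := v)) ` (SIGMA w0:Oset m n b s. Sset n \<alpha> (gmat m n c w0 s) A B)"
proof
  show "(\<lambda>(w0, v). w0(s := v)) ` (SIGMA w0:Oset m n b s. Sset n \<alpha> (gmat m n c w0 s) A B) \<subseteq> Tset m n \<alpha> c (b(s := A)) (- B)"
  proof clarify
    fix w0 v assume a: "w0 \<in> Oset m n b s" "v \<in> Sset n \<alpha> (gmat m n c w0 s) A B"
    then show "w0(s := v) \<in> Tset m n \<alpha> c (b(s := A)) (- B)" using fiber_char[OF s a(1), of v \<alpha> c A B] by simp
  qed
next
  show "Tset m n \<alpha> c (b(s := A)) (- B) \<subseteq> (\<lambda>(w0, v). w0(s := v)) ` (SIGMA w0:Oset m n b s. Sset n \<alpha> (gmat m n c w0 s) A B)"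
  proof
    fix Z assume Z: "Z \<in> Tset m n \<alpha> c (b(s := A)) (- B)"
    define w0 where "w0 = Z(s := (\<lambda>_. 0))"
    have w0: "w0 \<in> Oset m n b s" using Z s unfolding Oset_def Tset_def w0_def by (auto split: if_splits)
    have Zo: "Z = w0(s := Z s)" by (simp add: w0_def)
    have "Z s \<in> Sset n \<alpha> (gmat m n c w0 s) A B"
      using fiber_char[OF s w0, of "Z s" \<alpha> c A B] Z Zo by simp
    then show "Z \<in> (\<lambda>(w0, v). w0(s := v)) ` (SIGMA w0:Oset m n b s. Sset n \<alpha> (gmat m n c w0 s) A B)"
      using w0 Zo by (intro image_eqI[of _ _ "(w0, Z s)"]) auto
  qed
qed

lemma finite_Oset: "finite (Oset m n b s :: (nat \<Rightarrow> nat \<Rightarrow> 'a::{finite,comm_ring_1} poly) set)"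
proof -
  define N where "N = nat (\<Sum>t<m. \<bar>b t\<bar>)"
  define V where "V = {v :: nat \<Rightarrow> 'a poly. (\<forall>j. n \<le> j \<longrightarrow> v j = 0) \<and> (\<forall>j<n. degree (v j) \<le> N)}"
  have bt: "b t \<le> (\<Sum>t<m. \<bar>b t\<bar>)" if "t < m" for t
    using that member_le_sum[of t "{..<m}" "\<lambda>t. \<bar>b t\<bar>"] by auto
  have "Oset m n b s \<subseteq> {f. \<forall>x. (x \<in> {..<m} \<longrightarrow> f x \<in> V) \<and> (x \<notin> {..<m} \<longrightarrow> f x = (\<lambda>_. 0))}"
  proof (clarify, intro conjI allI impI)
    fix Z :: "nat \<Rightarrow> nat \<Rightarrow> 'a poly" and x assume Z: "Z \<in> Oset m n b s"
    { assume x: "x \<in> {..<m}"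
      have "degree (Z x j) \<le> N" if "j < n" for j
      proof (cases "x = s")
        case True then show ?thesis using Z by (simp add: Oset_def)
      next
        case False
        then have "Z x j = 0 \<or> int (degree (Z x j)) < b x" using Z x that by (auto simp: Oset_def)
        then show ?thesis using bt[of x] x by (auto simp: N_def)
      qed
      then show "Z x \<in> V" using Z by (auto simp: V_def Oset_def)
    }
    { assume "x \<notin> {..<m}" then show "Z x = (\<lambda>_. 0)" using Z by (auto simp: Oset_def) }
  qed
  moreover have "finite {f. \<forall>x. (x \<in> {..<m} \<longrightarrow> f x \<in> V) \<and> (x \<notin> {..<m} \<longrightarrow> f x = (\<lambda>_. 0))}"
    by (rule finite_set_of_finite_funs) (auto simp: V_def finite_vecs)
  ultimately show ?thesis by (rule finite_subset)
qed

lemma card_T: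
  fixes \<alpha> :: "int \<Rightarrow> 'a::{finite,field}"
  assumes s: "s < m"
  shows "card (Tset m n \<alpha> c (b(s := A)) (- B)) = (\<Sum>w0\<in>Oset m n b s. card (Sset n \<alpha> (gmat m n c w0 s) A B))"
proof -
  have inj: "inj_on (\<lambda>(w0, v). w0(s := v)) (SIGMA w0:Oset m n b s. Sset n \<alpha> (gmat m n c w0 s) A B)"
  proof (rule inj_onI, clarify)
    fix w0 v w0' v'
    assume w0: "w0 \<in> Oset m n b s" and w0': "w0' \<in> Oset m n b s" and e: "w0(s := v) = w0'(s := v')"
    have "v = v'" using e by (metis fun_upd_same)
    moreover have "w0 = w0'"
    proof
      fix t show "w0 t = w0' t"
        using w0 w0' e by (cases "t = s") (auto simp: Oset_def dest: fun_cong[of _ _ t])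
    qed
    ultimately show "w0 = w0' \<and> v = v'" by simp
  qed
  show ?thesis
    unfolding T_decomp[OF s] card_image[OF inj]
    by (rule card_SigmaI) (simp_all add: finite_Oset finite_Sset)
qed

lemma gmat_sym:
  fixes w0 :: "nat \<Rightarrow> nat \<Rightarrow> 'a::comm_ring_1 poly"
  assumes s: "s < m" and sym: "sym_coeffs (Suc m) n c"
  shows "gmat m n c w0 s i j = gmat m n c w0 s j i"
proof -
  define Z where "Z = (w0(s := dlt j))(m := dlt i)"
  have "(\<lambda>t. Z (sw s m t)) = (w0(s := dlt i))(m := dlt j)"
    using s by (auto simp: Z_def sw_def fun_eq_iff)
  then show ?thesis
    using Gam_swap[of s "Suc m" m n c Z] s sym by (simp add: gmat_def Z_def)
qed

lemma step1:
  fixes \<alpha> :: "int \<Rightarrow> 'a::{finite,field}"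
  assumes s: "s < m" and sym: "sym_coeffs (Suc m) n c" and bs: "b s \<le> - E"
  shows "card (Tset m n \<alpha> c b E) \<le> card (UNIV :: 'a set) ^ n * card (Tset m n \<alpha> c (b(s := b s - 1)) (E - 1))"
proof -
  have e1: "Tset m n \<alpha> c b E = Tset m n \<alpha> c (b(s := b s)) (- (- E))" by simp
  have e2: "E - 1 = - (- E + 1)" by simp
  have "card (Tset m n \<alpha> c b E) = (\<Sum>w0\<in>Oset m n b s. card (Sset n \<alpha> (gmat m n c w0 s) (b s) (- E)))"
    unfolding e1 by (rule card_T[OF s])
  also have "\<dots> \<le> (\<Sum>w0\<in>Oset m n b s. card (UNIV :: 'a set) ^ n * card (Sset n \<alpha> (gmat m n c w0 s) (b s - 1) (- E + 1)))"
  proof (rule sum_mono)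
    fix w0 :: "nat \<Rightarrow> nat \<Rightarrow> 'a poly"
    show "card (Sset n \<alpha> (gmat m n c w0 s) (b s) (- E))
        \<le> card (UNIV :: 'a set) ^ n * card (Sset n \<alpha> (gmat m n c w0 s) (b s - 1) (- E + 1))"
      by (rule core) (use gmat_sym[OF s sym] bs in auto)
  qed
  also have "\<dots> = card (UNIV :: 'a set) ^ n * card (Tset m n \<alpha> c (b(s := b s - 1)) (E - 1))"
    unfolding e2 card_T[OF s] by (simp add: sum_distrib_left)
  finally show ?thesis .
qed




lemma stepk:
  fixes \<alpha> :: "int \<Rightarrow> 'a::{finite,field}"
  assumes s: "s < m" and sym: "sym_coeffs (Suc m) n c" and bs: "b s \<le> - E"
  shows "card (Tset m n \<alpha> c b E) \<le> card (UNIV :: 'a set) ^ (n * k) * card (Tset m n \<alpha> c (b(s := b s - int k)) (E - int k))"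
proof (induction k)
  case 0
  then show ?case by simp
next
  case (Suc k)
  let ?q = "card (UNIV :: 'a set)"
  define bk where "bk = b(s := b s - int k)"
  have "bk s \<le> - (E - int k)" using bs by (simp add: bk_def)
  then have st: "card (Tset m n \<alpha> c bk (E - int k)) \<le> ?q ^ n * card (Tset m n \<alpha> c (bk(s := bk s - 1)) (E - int k - 1))"
    by (rule step1[OF s sym])
  have e1: "bk(s := bk s - 1) = b(s := b s - int (Suc k))" by (simp add: bk_def algebra_simps)
  have e2: "E - int k - 1 = E - int (Suc k)" by simp
  have "card (Tset m n \<alpha> c b E) \<le> ?q ^ (n * k) * card (Tset m n \<alpha> c bk (E - int k))"
    unfolding bk_def by (rule Suc.IH)
  also have "\<dots> \<le> ?q ^ (n * k) * (?q ^ n * card (Tset m n \<alpha> c (b(s := b s - int (Suc k))) (E - int (Suc k))))"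
    using st unfolding e1 e2 by simp
  also have "\<dots> = ?q ^ (n * Suc k) * card (Tset m n \<alpha> c (b(s := b s - int (Suc k))) (E - int (Suc k)))"
    by (simp add: power_add mult.assoc)
  finally show ?case .
qed

lemma allk:
  fixes \<alpha> :: "int \<Rightarrow> 'a::{finite,field}" and k :: "nat \<Rightarrow> nat"
  assumes sym: "sym_coeffs (Suc m) n c" and bE: "\<forall>t<m. b t \<le> - E"
  shows "s \<le> m \<Longrightarrow> card (Tset m n \<alpha> c b E) \<le> card (UNIV :: 'a set) ^ (n * (\<Sum>t<s. k t))
      * card (Tset m n \<alpha> c (\<lambda>t. if t < s then b t - int (k t) else b t) (E - int (\<Sum>t<s. k t)))"
proof (induction s)
  case 0
  then show ?case by simp
next
  case (Suc s)
  let ?q = "card (UNIV :: 'a set)"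
  define bs where "bs = (\<lambda>t. if t < s then b t - int (k t) else b t)"
  define Es where "Es = E - int (\<Sum>t<s. k t)"
  have s: "s < m" using Suc.prems by simp
  have bs0: "b s \<le> - E" using bE s by simp
  have "bs s = b s" by (simp add: bs_def)
  moreover have "0 \<le> int (\<Sum>t<s. k t)" by (rule of_nat_0_le_iff)
  ultimately have "bs s \<le> - Es" using bs0 unfolding Es_def by linarith
  then have st: "card (Tset m n \<alpha> c bs Es) \<le> ?q ^ (n * k s) * card (Tset m n \<alpha> c (bs(s := bs s - int (k s))) (Es - int (k s)))"
    by (rule stepk[OF s sym])
  have e1: "bs(s := bs s - int (k s)) = (\<lambda>t. if t < Suc s then b t - int (k t) else b t)"
    by (auto simp: bs_def fun_eq_iff)
  have e2: "Es - int (k s) = E - int (\<Sum>t<Suc s. k t)" by (simp add: Es_def)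
  have "card (Tset m n \<alpha> c b E) \<le> ?q ^ (n * (\<Sum>t<s. k t)) * card (Tset m n \<alpha> c bs Es)"
    using Suc.IH Suc.prems by (simp add: bs_def Es_def)
  also have "\<dots> \<le> ?q ^ (n * (\<Sum>t<s. k t)) * (?q ^ (n * k s) * card (Tset m n \<alpha> c (\<lambda>t. if t < Suc s then b t - int (k t) else b t) (E - int (\<Sum>t<Suc s. k t))))"
    using st unfolding e1 e2 by simp
  also have "\<dots> = ?q ^ (n * (\<Sum>t<Suc s. k t)) * card (Tset m n \<alpha> c (\<lambda>t. if t < Suc s then b t - int (k t) else b t) (E - int (\<Sum>t<Suc s. k t)))"
    by (simp add: power_add mult.assoc distrib_left)
  finally show ?case .
qed

lemma Tset_cong: "(\<And>t. t < m \<Longrightarrow> b t = b' t) \<Longrightarrow> Tset m n \<alpha> c b E = Tset m n \<alpha> c b' E"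
  unfolding Tset_def by auto

lemma prod_split_add: fixes a b :: nat shows "(\<Prod>t<a + b. f t) = (\<Prod>t<a. f t) * (\<Prod>t<b. f (a + t))"
proof -
  have "(\<Prod>t<a + b. f t) = (\<Prod>t\<in>{0..<a}. f t) * (\<Prod>t\<in>{a..<a + b}. f t)"
    by (simp add: prod.atLeastLessThan_concat atLeast0LessThan[symmetric])
  also have "(\<Prod>t\<in>{a..<a + b}. f t) = (\<Prod>t\<in>{0..<b}. f (t + a))"
    using prod.shift_bounds_nat_ivl[of f 0 a b] by (simp add: add.commute)
  finally show ?thesis by (simp add: atLeast0LessThan add.commute)
qed

lemma idx_append: "idx (d1 + d2) n = (\<lambda>(js, ks). js @ ks) ` (idx d1 n \<times> idx d2 n)"
proof
  show "(\<lambda>(js, ks). js @ ks) ` (idx d1 n \<times> idx d2 n) \<subseteq> idx (d1 + d2) n"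
    by (auto simp: idx_def)
  show "idx (d1 + d2) n \<subseteq> (\<lambda>(js, ks). js @ ks) ` (idx d1 n \<times> idx d2 n)"
  proof
    fix ls assume ls: "ls \<in> idx (d1 + d2) n"
    have "take d1 ls \<in> idx d1 n" "drop d1 ls \<in> idx d2 n"
      using ls by (auto simp: idx_def dest: in_set_takeD in_set_dropD)
    then show "ls \<in> (\<lambda>(js, ks). js @ ks) ` (idx d1 n \<times> idx d2 n)"
      by (intro image_eqI[of _ _ "(take d1 ls, drop d1 ls)"]) auto
  qed
qed

lemma inj_append: "inj_on (\<lambda>(js, ks). js @ ks) (idx d1 n \<times> idx d2 n)"
proof (rule inj_onI)
  fix p p' assume a: "p \<in> idx d1 n \<times> idx d2 n" "p' \<in> idx d1 n \<times> idx d2 n"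
    "(\<lambda>(js, ks). js @ ks) p = (\<lambda>(js, ks). js @ ks) p'"
  obtain js ks js' ks' where p: "p = (js, ks)" "p' = (js', ks')" by (cases p, cases p')
  have "length js = length js'" using a(1,2) by (simp add: p idx_def)
  then show "p = p'" using a(3) by (simp add: p)
qed

lemma GammaG_Gam:
  fixes c :: "nat list \<Rightarrow> 'a::comm_ring_1"
  assumes Gass: "\<forall>js\<in>idx d1 n. \<forall>ks\<in>idx d2 n. Gc js ks = C0 * c (js @ ks)"
  shows "GammaG n d1 d2 Gc Xv Yv = smult C0 (Gam (d1 + d2) n c (\<lambda>t. if t < d1 then Xv t else Yv (t - d1)))"
proof -
  define Zc where "Zc = (\<lambda>t. if t < d1 then Xv t else Yv (t - d1))"
  have pr: "(\<Prod>t<d1 + d2. Zc t ((js @ ks) ! t)) = (\<Prod>t<d1. Xv t (js ! t)) * (\<Prod>t<d2. Yv t (ks ! t))"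
    if "js \<in> idx d1 n" for js ks
  proof -
    have l: "length js = d1" using that by (simp add: idx_def)
    show ?thesis unfolding prod_split_add using l
      by (simp add: Zc_def nth_append)
  qed
  have "GammaG n d1 d2 Gc Xv Yv = (\<Sum>(js, ks)\<in>idx d1 n \<times> idx d2 n. smult C0 (smult (c (js @ ks)) (\<Prod>t<d1 + d2. Zc t ((js @ ks) ! t))))"
    unfolding GammaG_def sum.cartesian_product
    by (intro sum.cong refl) (auto simp: Gass pr)
  also have "\<dots> = (\<Sum>ls\<in>idx (d1 + d2) n. smult C0 (smult (c ls) (\<Prod>t<d1 + d2. Zc t (ls ! t))))"
    unfolding idx_append sum.reindex[OF inj_append] by (simp add: case_prod_beta)
  also have "\<dots> = smult C0 (Gam (d1 + d2) n c Zc)"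
    by (simp add: Gam_def smult_sum_right)
  finally show ?thesis by (simp add: Zc_def)
qed

lemma fnorm_smult:
  fixes \<alpha> :: "int \<Rightarrow> 'a::field"
  assumes "C0 \<noteq> 0"
  shows "fnorm_lt \<alpha> (smult C0 g) E = fnorm_lt \<alpha> g E"
  using assms by (simp add: fnorm_lt_def ser_smult)




definition Zof :: "nat \<Rightarrow> nat \<Rightarrow> (nat \<Rightarrow> nat \<Rightarrow> 'a::zero poly) \<Rightarrow> (nat \<Rightarrow> nat \<Rightarrow> 'a poly) \<Rightarrow> nat \<Rightarrow> nat \<Rightarrow> 'a poly" where
  "Zof d1 d2 Xv Yv = (\<lambda>t. if t < d1 then Xv t else if t < d1 + d2 - 1 then Yv (t - d1) else (\<lambda>_. 0))"

lemma Gamma_ext_eq: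
  fixes c :: "nat list \<Rightarrow> 'a::comm_ring_1"
  assumes d2: "1 \<le> d2" and Gass: "\<forall>js\<in>idx d1 n. \<forall>ks\<in>idx d2 n. Gc js ks = C0 * c (js @ ks)"
  shows "GammaG n d1 d2 Gc Xv (ext_unit d2 Yv i)
       = smult C0 (Gam (Suc (d1 + d2 - 1)) n c ((Zof d1 d2 Xv Yv)(d1 + d2 - 1 := dlt i)))"
proof -
  have e: "Suc (d1 + d2 - 1) = d1 + d2" using d2 by simp
  have "Gam (d1 + d2) n c (\<lambda>t. if t < d1 then Xv t else ext_unit d2 Yv i (t - d1))
      = Gam (d1 + d2) n c ((Zof d1 d2 Xv Yv)(d1 + d2 - 1 := dlt i))"
  proof (rule Gam_cong)
    fix t assume t: "t < d1 + d2"
    show "(if t < d1 then Xv t else ext_unit d2 Yv i (t - d1)) = ((Zof d1 d2 Xv Yv)(d1 + d2 - 1 := dlt i)) t"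
      using t d2 by (auto simp: Zof_def ext_unit_def dlt_def fun_eq_iff)
  qed
  then show ?thesis using GammaG_Gam[OF Gass, of Xv "ext_unit d2 Yv i"] e by simp
qed

lemma count_eq:
  fixes c :: "nat list \<Rightarrow> 'a::field" and \<alpha> :: "int \<Rightarrow> 'a"
  assumes d2: "1 \<le> d2" and Gass: "\<forall>js\<in>idx d1 n. \<forall>ks\<in>idx d2 n. Gc js ks = C0 * c (js @ ks)"
    and C0: "C0 \<noteq> 0"
  shows "count_N n d1 d2 Gc \<alpha> B1 B2 E = card (Tset (d1 + d2 - 1) n \<alpha> c (\<lambda>t. if t < d1 then B1 else B2) E)"
proof -
  define m where "m = d1 + d2 - 1"
  define CS where "CS = {(Xv, Yv). vecs_bounded d1 n B1 Xv \<and> vecs_bounded (d2 - 1) n B2 Yv \<and>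
      (\<forall>i<n. fnorm_lt \<alpha> (GammaG n d1 d2 Gc Xv (ext_unit d2 Yv i)) E)}"
  define T where "T = Tset m n \<alpha> c (\<lambda>t. if t < d1 then B1 else B2) E"
  define f where "f = (\<lambda>p :: (nat \<Rightarrow> nat \<Rightarrow> 'a poly) \<times> (nat \<Rightarrow> nat \<Rightarrow> 'a poly). Zof d1 d2 (fst p) (snd p))"
  define f' where "f' = (\<lambda>Z :: nat \<Rightarrow> nat \<Rightarrow> 'a poly. ((\<lambda>t. if t < d1 then Z t else (\<lambda>_. 0)),
      (\<lambda>t. if t < d2 - 1 then Z (t + d1) else (\<lambda>_. 0))))"
  have FN: "fnorm_lt \<alpha> (GammaG n d1 d2 Gc Xv (ext_unit d2 Yv i)) E
      = fnorm_lt \<alpha> (Gam (Suc m) n c ((Zof d1 d2 Xv Yv)(m := dlt i))) E" for Xv Yv i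
    unfolding m_def Gamma_ext_eq[OF d2 Gass] fnorm_smult[OF C0] by (rule refl)
  have ff': "f (f' Z) = Z" if "Z \<in> T" for Z
  proof (rule ext)
    fix t show "f (f' Z) t = Z t"
      using that d2 by (auto simp: f_def f'_def Zof_def T_def Tset_def m_def fun_eq_iff)
  qed
  have f'f: "f' (f p) = p" if "p \<in> CS" for p
  proof -
    obtain Xv Yv where p: "p = (Xv, Yv)" by (cases p)
    have X0: "Xv t = (\<lambda>_. 0)" if "d1 \<le> t" for t
      using \<open>p \<in> CS\<close> that by (auto simp: p CS_def vecs_bounded_def fun_eq_iff)
    have Y0: "Yv t = (\<lambda>_. 0)" if "d2 - 1 \<le> t" for t
      using \<open>p \<in> CS\<close> that by (auto simp: p CS_def vecs_bounded_def fun_eq_iff)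
    have "(\<lambda>t. if t < d1 then Zof d1 d2 Xv Yv t else (\<lambda>_. 0)) = Xv"
      using X0 by (auto simp: Zof_def fun_eq_iff)
    moreover have "(\<lambda>t. if t < d2 - 1 then Zof d1 d2 Xv Yv (t + d1) else (\<lambda>_. 0)) = Yv"
      using Y0 by (auto simp: Zof_def fun_eq_iff)
    ultimately show ?thesis by (simp add: p f_def f'_def)
  qed
  have fT: "f p \<in> T" if "p \<in> CS" for p
  proof -
    obtain Xv Yv where p: "p = (Xv, Yv)" by (cases p)
    have "(\<forall>t j. (m \<le> t \<or> n \<le> j) \<longrightarrow> Zof d1 d2 Xv Yv t j = 0)"
      using \<open>p \<in> CS\<close> d2 by (auto simp: p CS_def vecs_bounded_def Zof_def m_def)
    moreover have "\<forall>t<m. \<forall>j<n. Zof d1 d2 Xv Yv t j = 0 \<or> int (degree (Zof d1 d2 Xv Yv t j)) < (if t < d1 then B1 else B2)"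
      using \<open>p \<in> CS\<close> by (auto simp: p CS_def vecs_bounded_def Zof_def m_def)
    moreover have "\<forall>i<n. fnorm_lt \<alpha> (Gam (Suc m) n c ((Zof d1 d2 Xv Yv)(m := dlt i))) E"
      using \<open>p \<in> CS\<close> FN by (auto simp: p CS_def)
    ultimately show ?thesis by (simp add: p f_def T_def Tset_def)
  qed
  have f'CS: "f' Z \<in> CS" if "Z \<in> T" for Z
  proof -
    have Z: "\<forall>t j. (m \<le> t \<or> n \<le> j) \<longrightarrow> Z t j = 0"
      "\<forall>t<m. \<forall>j<n. Z t j = 0 \<or> int (degree (Z t j)) < (if t < d1 then B1 else B2)"
      "\<forall>i<n. fnorm_lt \<alpha> (Gam (Suc m) n c (Z(m := dlt i))) E"
      using that by (simp_all add: T_def Tset_def)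
    have dm: "d1 \<le> m" using d2 by (simp add: m_def)
    have Z2a: "Z t j = 0 \<or> int (degree (Z t j)) < B1" if "t < d1" "j < n" for t j
      using Z(2)[rule_format, of t j] dm that by simp
    have Z2b: "Z (t + d1) j = 0 \<or> int (degree (Z (t + d1) j)) < B2" if "t < d2 - 1" "j < n" for t j
      using Z(2)[rule_format, of "t + d1" j] that by (simp add: m_def)
    have Z1: "Z t j = 0" if "n \<le> j" for t j using Z(1) that by simp
    have v1: "vecs_bounded d1 n B1 (fst (f' Z))"
      unfolding vecs_bounded_def f'_def using Z1 Z2a by auto
    have v2: "vecs_bounded (d2 - 1) n B2 (snd (f' Z))"
      unfolding vecs_bounded_def f'_def using Z1 Z2b by auto
    have zz: "Zof d1 d2 (fst (f' Z)) (snd (f' Z)) = Z" using ff'[OF that] by (simp add: f_def case_prod_beta)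
    have "\<forall>i<n. fnorm_lt \<alpha> (GammaG n d1 d2 Gc (fst (f' Z)) (ext_unit d2 (snd (f' Z)) i)) E"
      using Z(3) FN zz by simp
    then show ?thesis using v1 v2 by (simp add: CS_def case_prod_beta)
  qed
  have "bij_betw f CS T"
    by (rule bij_betw_byWitness[where f' = f']) (use ff' f'f fT f'CS in auto)
  then have "card CS = card T" by (rule bij_betw_same_card)
  then show ?thesis by (simp add: count_N_def CS_def T_def m_def)
qed

lemma sum_if_lt:
  assumes "d1 \<le> m"
  shows "(\<Sum>t<m. if t < d1 then a else b) = d1 * a + (m - d1) * (b :: nat)"
proof -
  have u: "{..<m} = {..<d1} \<union> {d1..<m}" using assms by auto
  have "(\<Sum>t<m. if t < d1 then a else b) = (\<Sum>t<d1. if t < d1 then a else b) + (\<Sum>t\<in>{d1..<m}. if t < d1 then a else b)"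
    unfolding u by (rule sum.union_disjoint) auto
  also have "(\<Sum>t<d1. if t < d1 then a else b) = (\<Sum>t<d1. a)" by (rule sum.cong) auto
  also have "(\<Sum>t\<in>{d1..<m}. if t < d1 then a else b) = (\<Sum>t\<in>{d1..<m}. b)" by (rule sum.cong) auto
  finally show ?thesis by simp
qed

theorem lemma4p4:
  fixes c :: "nat list \<Rightarrow> 'a::{finite,field}"
    and Gc :: "nat list \<Rightarrow> nat list \<Rightarrow> 'a"
    and C0 :: 'a
    and \<alpha> :: "int \<Rightarrow> 'a"
    and d1 d2 n :: nat and P1 P2 Q1 Q2 :: int
  assumes "d1 + d2 \<ge> 2" and "d2 \<ge> 1"
    and "CHAR('a) > d1 + d2"
    and "n \<ge> 1"
    and "1 \<le> P1" and "P1 \<le> P2" and "d1 = 0 \<longrightarrow> P1 = P2"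
    and "C0 \<noteq> 0"
    and "sym_coeffs (d1 + d2) n c"
    and "nonsingular_form (d1 + d2) n c"
    and "\<forall>js\<in>idx d1 n. \<forall>ks\<in>idx d2 n. Gc js ks = C0 * c (js @ ks)"
    and "in_T \<alpha>"
    and "Q1 \<le> 0" and "Q2 \<le> 0"
  shows "real (N2_0 n d1 d2 Gc P1 P2 \<alpha>)
           \<le> real (card (UNIV :: 'a set)) powi (- (int d1 * Q1 * int n))
             * real (card (UNIV :: 'a set)) powi (- ((int d2 - 1) * Q2 * int n))
             * real (N1_d1 n d1 d2 Gc P1 P2 Q1 Q2 \<alpha>)"
proof -
  let ?q = "card (UNIV :: 'a set)"
  note d2 = assms(2) and Gass = assms(11) and C0 = assms(8)
  define m where "m = d1 + d2 - 1"
  have Sm: "Suc m = d1 + d2" using d2 by (simp add: m_def)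
  have sym: "sym_coeffs (Suc m) n c" using assms(9) Sm by simp
  define b0 where "b0 = (\<lambda>t. if t < d1 then P1 else P2)"
  define k where "k = (\<lambda>t. if t < d1 then nat (- Q1) else nat (- Q2))"
  define K where "K = d1 * nat (- Q1) + (d2 - 1) * nat (- Q2)"
  have N2: "N2_0 n d1 d2 Gc P1 P2 \<alpha> = card (Tset m n \<alpha> c b0 (- P2))"
    by (simp add: N2_0_def count_eq[OF d2 Gass C0] m_def b0_def)
  have bE: "\<forall>t<m. b0 t \<le> - (- P2)" using assms(6) by (simp add: b0_def)
  have main: "card (Tset m n \<alpha> c b0 (- P2)) \<le> ?q ^ (n * (\<Sum>t<m. k t))
      * card (Tset m n \<alpha> c (\<lambda>t. if t < m then b0 t - int (k t) else b0 t) (- P2 - int (\<Sum>t<m. k t)))"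
    by (rule allk[OF sym bE]) simp
  have dm: "d1 \<le> m" using d2 by (simp add: m_def)
  have sumk: "(\<Sum>t<m. k t) = K"
    unfolding k_def K_def sum_if_lt[OF dm] using d2 by (simp add: m_def)
  have T1: "Tset m n \<alpha> c (\<lambda>t. if t < m then b0 t - int (k t) else b0 t) (- P2 - int (\<Sum>t<m. k t))
      = Tset m n \<alpha> c (\<lambda>t. if t < d1 then Q1 + P1 else Q2 + P2) (int d1 * Q1 + (int d2 - 1) * Q2 - P2)"
  proof -
    have i1: "int (nat (- Q1)) = - Q1" using assms(13) by simp
    have i2: "int (nat (- Q2)) = - Q2" using assms(14) by simp
    have i3: "int (d2 - 1) = int d2 - 1" using d2 by simp
    have "int K = int d1 * (- Q1) + (int d2 - 1) * (- Q2)"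
      unfolding K_def of_nat_add of_nat_mult i1 i2 i3 by (rule refl)
    then have eE: "- P2 - int (\<Sum>t<m. k t) = int d1 * Q1 + (int d2 - 1) * Q2 - P2"
      unfolding sumk by (simp add: algebra_simps)
    have bb: "(if t < m then b0 t - int (k t) else b0 t) = (if t < d1 then Q1 + P1 else Q2 + P2)" if "t < m" for t
      using that assms(13,14) by (simp add: b0_def k_def)
    show ?thesis unfolding eE by (rule Tset_cong) (rule bb)
  qed
  have N1: "N1_d1 n d1 d2 Gc P1 P2 Q1 Q2 \<alpha>
      = card (Tset m n \<alpha> c (\<lambda>t. if t < d1 then Q1 + P1 else Q2 + P2) (int d1 * Q1 + (int d2 - 1) * Q2 - P2))"
    by (simp add: N1_d1_def count_eq[OF d2 Gass C0] m_def)
  have nat_ineq: "N2_0 n d1 d2 Gc P1 P2 \<alpha> \<le> ?q ^ (n * K) * N1_d1 n d1 d2 Gc P1 P2 Q1 Q2 \<alpha>"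
    using main unfolding N2 N1 T1[symmetric] sumk .
  have e1: "- (int d1 * Q1 * int n) = int (d1 * nat (- Q1) * n)" using assms(13) by simp
  have e2: "- ((int d2 - 1) * Q2 * int n) = int ((d2 - 1) * nat (- Q2) * n)" using assms(14) d2 by (simp add: of_nat_diff)
  have "real (card (UNIV :: 'a set)) powi (- (int d1 * Q1 * int n))
             * real (card (UNIV :: 'a set)) powi (- ((int d2 - 1) * Q2 * int n))
      = real (?q ^ (n * K))"
    unfolding e1 e2 power_int_of_nat by (simp add: K_def power_add[symmetric] algebra_simps)
  then show ?thesis using nat_ineq
    by (metis of_nat_le_iff of_nat_mult)
qed


end
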